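(* For $X_d=\otimes_{j=1}^d X_{1,j}$, the following are equivalent: (i) $\lim_{d\to\infty}n^{X_d}(\varepsilon)=\infty$ for every $\varepsilon\in(0,1)$; (ii) $\displaystyle\sum_{j=1}^\infty\sum_{k=2}^\infty\frac{\lambda^{X_{1,j}}_k}{\lambda^{X_{1,j}}_1}=\infty$.
   Context: For a centered Hilbert-space random element $Z$ with finite second moment, $\lambda^Z_1\ge\lambda^Z_2\ge\dots\ge 0$ denote the eigenvalues of its covariance operator $K^Z$ listed with multiplicity (padded with zeros if there are finitely many), $\Lambda^Z=\sum_k\lambda^Z_k$, $\bar\lambda^Z_k=\lambda^Z_k/\Lambda^Z$. Let $H_{1,j}$, $j\in\mathbb N$, be separable Hilbert spaces and $X_{1,j}$ centered $H_{1,j}$-valued random elements with $\mathbb E\|X_{1,j}\|^2<\infty$ and $\lambda^{X_{1,j}}_1>0$. $X_d=\otimes_{j=1}^dX_{1,j}$ means: $X_d$ is a centered random element of the Hilbert tensor product $H_d=\otimes_{j=1}^dH_{1,j}$ with covariance operator $K^{X_d}=\otimes_{j=1}^dK^{X_{1,j}}$; so the eigenvalues of $K^{X_d}$ are the products $\prod_{j=1}^d\lambda^{X_{1,j}}_{k_j}$, $(k_1,\dots,k_d)\in\mathbb N^d$, and $\Lambda^{X_d}=\prod_j\Lambda^{X_{1,j}}$. The average case approximation complexity is $n^{X_d}(\varepsilon)=\min\{n\in\mathbb N: e^{X_d}(n)\le\varepsilon e^{X_d}(0)\}$, where $e^{X_d}(0)=(\mathbb E\|X_d\|^2)^{1/2}$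 and $e^{X_d}(n)$ is the infimum of $(\mathbb E\|X_d-\sum_{m=1}^n l_m(X_d)\psi_m\|^2)^{1/2}$ over $\psi_m\in H_d$, $l_m\in H_d^*$; equivalently $n^{X_d}(\varepsilon)=\min\{n:\sum_{k>n}\bar\lambda^{X_d}_k\le\varepsilon^2\}$. *)

theory Defs
  imports Complex_Main "HOL-Library.FuncSet"
begin

text \<open>Eigenvalues of a coordinate covariance operator are given as a sequence
  indexed from 0: lam j k stands for the (k+1)-th eigenvalue of the covariance
  operator of the (j+1)-th coordinate element.\<close>

text \<open>Non-increasing rearrangement (with multiplicity, padded with zeros) of a
  nonnegative family f on an index set I; 0-based: entry k is the (k+1)-th largest.\<close>
definition decr_rearr :: "('a \<Rightarrow> real) \<Rightarrow> 'a set \<Rightarrow> nat \<Rightarrow> real" where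
  "decr_rearr f I k =
     Sup (insert 0 {t. \<exists>S\<subseteq>I. finite S \<and> card S = Suc k \<and> (\<forall>i\<in>S. t \<le> f i)})"

definition tensor_index :: "nat \<Rightarrow> (nat \<Rightarrow> nat) set" where
  "tensor_index d = PiE {..<d} (\<lambda>_. UNIV)"

definition tensor_eig :: "(nat \<Rightarrow> nat \<Rightarrow> real) \<Rightarrow> nat \<Rightarrow> (nat \<Rightarrow> nat) \<Rightarrow> real" where
  "tensor_eig lam d \<kappa> = (\<Prod>j<d. lam j (\<kappa> j))"

definition tensor_eigs :: "(nat \<Rightarrow> nat \<Rightarrow> real) \<Rightarrow> nat \<Rightarrow> nat \<Rightarrow> real" where
  "tensor_eigs lam d = decr_rearr (tensor_eig lam d) (tensor_index d)"

definition tensor_trace :: "(nat \<Rightarrow> nat \<Rightarrow> real) \<Rightarrow> nat \<Rightarrow> real" where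
  "tensor_trace lam d = (\<Prod>j<d. (\<Sum>k. lam j k))"

text \<open>Average case complexity n^{X_d}(eps) = min{n : sum_{k>n} bar-lambda_k \<le> eps^2}
  (1-based k > n corresponds to 0-based indices \<ge> n).\<close>
definition avg_complexity :: "(nat \<Rightarrow> nat \<Rightarrow> real) \<Rightarrow> nat \<Rightarrow> real \<Rightarrow> nat" where
  "avg_complexity lam d \<epsilon> =
     (LEAST n. (\<Sum>k. tensor_eigs lam d (k + n)) / tensor_trace lam d \<le> \<epsilon>\<^sup>2)"

end

theory Submission
  imports Defs "HOL-Analysis.Analysis"
begin


lemma dr_le:
  assumes "0 \<le> c"
    and "\<And>t S. S \<subseteq> I \<Longrightarrow> finite S \<Longrightarrow> card S = Suc k \<Longrightarrow> (\<forall>i\<in>S. t \<le> f i) \<Longrightarrow> t \<le> c"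
  shows "decr_rearr f I k \<le> c"
  unfolding decr_rearr_def
  by (rule cSup_least) (use assms in auto)

lemma dr_ge:
  assumes B: "\<And>i. i \<in> I \<Longrightarrow> f i \<le> B"
    and "S \<subseteq> I" "finite S" "card S = Suc k" "\<forall>i\<in>S. t \<le> f i"
  shows "t \<le> decr_rearr f I k"
  unfolding decr_rearr_def
proof (rule cSup_upper)
  show "t \<in> insert 0 {t. \<exists>S\<subseteq>I. finite S \<and> card S = Suc k \<and> (\<forall>i\<in>S. t \<le> f i)}"
    using assms by blast
  show "bdd_above (insert 0 {t. \<exists>S\<subseteq>I. finite S \<and> card S = Suc k \<and> (\<forall>i\<in>S. t \<le> f i)})"
  proof (rule bdd_aboveI[of _ "max 0 B"])
    fix x assume "x \<in> insert 0 {t. \<exists>S\<subseteq>I. finite S \<and> card S = Suc k \<and> (\<forall>i\<in>S. t \<le> f i)}"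
    then show "x \<le> max 0 B"
    proof
      assume "x \<in> {t. \<exists>S\<subseteq>I. finite S \<and> card S = Suc k \<and> (\<forall>i\<in>S. t \<le> f i)}"
      then obtain S where S: "S \<subseteq> I" "finite S" "card S = Suc k" "\<forall>i\<in>S. x \<le> f i" by blast
      then obtain i where "i \<in> S" by fastforce
      with S B show ?thesis by force
    qed simp
  qed
qed

lemma dr_nonneg:
  assumes B: "\<And>i. i \<in> I \<Longrightarrow> f i \<le> B"
  shows "0 \<le> decr_rearr f I k"
  unfolding decr_rearr_def
proof (rule cSup_upper)
  show "bdd_above (insert 0 {t. \<exists>S\<subseteq>I. finite S \<and> card S = Suc k \<and> (\<forall>i\<in>S. t \<le> f i)})"
  proof (rule bdd_aboveI[of _ "max 0 B"])
    fix x assume "x \<in> insert 0 {t. \<exists>S\<subseteq>I. finite S \<and> card S = Suc k \<and> (\<forall>i\<in>S. t \<le> f i)}"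
    then show "x \<le> max 0 B"
    proof
      assume "x \<in> {t. \<exists>S\<subseteq>I. finite S \<and> card S = Suc k \<and> (\<forall>i\<in>S. t \<le> f i)}"
      then obtain S where S: "S \<subseteq> I" "finite S" "card S = Suc k" "\<forall>i\<in>S. x \<le> f i" by blast
      then obtain i where "i \<in> S" by fastforce
      with S B show ?thesis by force
    qed simp
  qed
qed simp

lemma dr_mono:
  assumes B: "\<And>i. i \<in> I \<Longrightarrow> f i \<le> B"
  shows "decr_rearr f I (Suc k) \<le> decr_rearr f I k"
proof (rule dr_le[OF dr_nonneg[OF B]])
  fix t S assume S: "S \<subseteq> I" "finite S" "card S = Suc (Suc k)" "\<forall>i\<in>S. t \<le> f i"
  obtain T where T: "T \<subseteq> S" "card T = Suc k" "finite T"
    using obtain_subset_with_card_n[of "Suc k" S] S by auto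
  show "t \<le> decr_rearr f I k"
    by (rule dr_ge[OF B, where S=T]) (use S T in auto)
qed

lemma dr_shift:
  assumes B: "\<And>i. i \<in> I \<Longrightarrow> f i \<le> B"
  shows "decr_rearr f I (Suc k) \<le> decr_rearr f (I - {m}) k"
proof (rule dr_le[OF dr_nonneg[of "I - {m}" f B]])
  show "\<And>i. i \<in> I - {m} \<Longrightarrow> f i \<le> B" using B by auto
  fix t S assume S: "S \<subseteq> I" "finite S" "card S = Suc (Suc k)" "\<forall>i\<in>S. t \<le> f i"
  have "Suc k \<le> card (S - {m})" using S by (simp add: card_Diff_singleton_if)
  then obtain T where T: "T \<subseteq> S - {m}" "card T = Suc k" "finite T"
    using obtain_subset_with_card_n[of "Suc k" "S - {m}"] by auto
  show "t \<le> decr_rearr f (I - {m}) k"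
    by (rule dr_ge[of "I - {m}" f B, where S=T]) (use S T B in auto)
qed

lemma dr_empty: "decr_rearr f {} k = 0"
  unfolding decr_rearr_def by simp

lemma dr_upper_eps:
  fixes f :: "'a \<Rightarrow> real"
  assumes nn: "\<And>i. i \<in> I \<Longrightarrow> 0 \<le> f i" and sm: "f summable_on I" and e: "0 < e"
  shows "(\<Sum>k<K. decr_rearr f I k) \<le> infsum f I + real K * e"
  using nn sm
proof (induction K arbitrary: I)
  case 0
  then show ?case by (simp add: infsum_nonneg)
next
  case (Suc K)
  show ?case
  proof (cases "I = {}")
    case True
    then show ?thesis using e by (simp add: dr_empty)
  next
    case False
    have B: "f i \<le> infsum f I" if "i \<in> I" for i
      using finite_sum_le_has_sum[where f=f and S="infsum f I" and A=I and B="{i}"] Suc.prems that by auto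
    have bdd: "bdd_above (f ` I)" using B by (intro bdd_aboveI2[where M="infsum f I"]) auto
    have "Sup (f ` I) - e < Sup (f ` I)" using e by simp
    then obtain m where m: "m \<in> I" "Sup (f ` I) - e < f m"
      using less_cSupD[of "f ` I"] False by blast
    have h0: "decr_rearr f I 0 \<le> f m + e"
    proof (rule dr_le)
      show "0 \<le> f m + e" using Suc.prems(1)[OF m(1)] e by linarith
      fix t S assume S: "S \<subseteq> I" "finite S" "card S = Suc 0" "\<forall>i\<in>S. t \<le> f i"
      then obtain i where "S = {i}" by (auto simp: card_Suc_eq)
      with S have "i \<in> I" "t \<le> f i" by auto
      then have "t \<le> Sup (f ` I)" using bdd by (meson cSup_upper image_eqI order_trans)
      then show "t \<le> f m + e" using m by simp
    qed
    have sh: "(\<Sum>k<K. decr_rearr f I (Suc k)) \<le> (\<Sum>k<K. decr_rearr f (I - {m}) k)"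
      by (rule sum_mono, rule dr_shift[OF B]) auto
    have sm': "f summable_on (I - {m})"
      using Suc.prems(2) by (rule summable_on_subset) auto
    have IH: "(\<Sum>k<K. decr_rearr f (I - {m}) k) \<le> infsum f (I - {m}) + real K * e"
      using Suc.IH[of "I - {m}"] Suc.prems sm' by auto
    have split: "infsum f I = f m + infsum f (I - {m})"
      using infsum_insert[OF sm', of m] m by (simp add: insert_absorb)
    show ?thesis
      unfolding sum.lessThan_Suc_shift using h0 sh IH split by (simp add: algebra_simps)
  qed
qed

lemma dr_upper:
  fixes f :: "'a \<Rightarrow> real"
  assumes nn: "\<And>i. i \<in> I \<Longrightarrow> 0 \<le> f i" and sm: "f summable_on I"
  shows "(\<Sum>k<K. decr_rearr f I k) \<le> infsum f I"
proof (rule field_le_epsilon)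
  fix e :: real assume e: "0 < e"
  have "(\<Sum>k<K. decr_rearr f I k) \<le> infsum f I + real K * (e / (real K + 1))"
    using dr_upper_eps[OF nn sm, of "e / (real K + 1)"] e by auto
  also have "real K * (e / (real K + 1)) \<le> e"
    using e by (simp add: field_simps)
  finally show "(\<Sum>k<K. decr_rearr f I k) \<le> infsum f I + e" by simp
qed

lemma dr_lower_finite:
  fixes f :: "'a \<Rightarrow> real"
  assumes B: "\<And>i. i \<in> I \<Longrightarrow> f i \<le> B"
  shows "finite S \<Longrightarrow> S \<subseteq> I \<Longrightarrow> sum f S \<le> (\<Sum>k<card S. decr_rearr f I k)"
proof (induction "card S" arbitrary: S)
  case 0
  then show ?case by simp
next
  case (Suc n)
  then have ne: "S \<noteq> {}" by auto
  have "Min (f ` S) \<in> f ` S" using Suc.prems(1) ne by (intro Min_in) auto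
  then obtain m where m: "m \<in> S" "f m = Min (f ` S)" by force
  have mmin: "\<forall>i\<in>S. f m \<le> f i" using m Suc.prems by auto
  have c: "card (S - {m}) = n" using Suc.hyps m by simp
  have IH: "sum f (S - {m}) \<le> (\<Sum>k<n. decr_rearr f I k)"
    using Suc.hyps(1)[of "S - {m}"] c Suc.prems by auto
  have r: "f m \<le> decr_rearr f I n"
    by (rule dr_ge[OF B, where S=S]) (use Suc mmin in auto)
  have "sum f S = f m + sum f (S - {m})" using m Suc.prems by (simp add: sum.remove)
  then show ?case using IH r Suc.hyps(2)[symmetric] by simp
qed

lemma dr_sums:
  fixes f :: "'a \<Rightarrow> real"
  assumes nn: "\<And>i. i \<in> I \<Longrightarrow> 0 \<le> f i" and sm: "f summable_on I"
  shows "decr_rearr f I sums infsum f I"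
proof -
  have B: "f i \<le> infsum f I" if "i \<in> I" for i
    using finite_sum_le_has_sum[where f=f and S="infsum f I" and A=I and B="{i}"] sm nn that by auto
  have nnr: "0 \<le> decr_rearr f I k" for k by (rule dr_nonneg[where B="infsum f I"], rule B)
  have s: "summable (decr_rearr f I)"
  proof (rule bounded_imp_summable[of _ "infsum f I"])
    fix n show "0 \<le> decr_rearr f I n" by (rule nnr)
    have "{..n} = {..<Suc n}" by auto
    then show "sum (decr_rearr f I) {..n} \<le> infsum f I" using dr_upper[OF nn sm, of "Suc n"] by simp
  qed
  have le: "suminf (decr_rearr f I) \<le> infsum f I"
    by (rule suminf_le_const[OF s], rule dr_upper[OF nn sm])
  have ge: "infsum f I \<le> suminf (decr_rearr f I)"
  proof (rule infsum_le_finite_sums[OF sm])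
    fix F assume F: "finite F" "F \<subseteq> I"
    have "sum f F \<le> (\<Sum>k<card F. decr_rearr f I k)" by (rule dr_lower_finite[OF B F])
    also have "\<dots> \<le> suminf (decr_rearr f I)" by (rule sum_le_suminf[OF s]) (simp_all add: nnr)
    finally show "sum f F \<le> suminf (decr_rearr f I)" .
  qed
  have "suminf (decr_rearr f I) = infsum f I" using le ge by linarith
  then show ?thesis using summable_sums[OF s] by simp
qed



lemma lam_le0:
  assumes nonincr: "\<And>j k. lam j (Suc k) \<le> (lam j k :: real)"
  shows "lam j k \<le> lam j 0"
proof (induction k)
  case (Suc k) then show ?case using nonincr[of j k] by linarith
qed simp

lemma tensor_sum:
  fixes lam :: "nat \<Rightarrow> nat \<Rightarrow> real"
  assumes nonneg: "\<And>j k. 0 \<le> lam j k"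
    and summ: "\<And>j. summable (lam j)"
    and pos: "\<And>j. 0 < lam j 0"
  shows "tensor_eig lam d summable_on tensor_index d \<and> infsum (tensor_eig lam d) (tensor_index d) = tensor_trace lam d
         \<and> 0 < tensor_trace lam d"
proof -
  have hs: "(lam j has_sum suminf (lam j)) UNIV" for j
    by (rule sums_nonneg_imp_has_sum[OF summable_sums[OF summ] nonneg])
  have ab: "(\<lambda>k. \<bar>lam j k\<bar>) summable_on UNIV" for j
  proof -
    have "(\<lambda>k. \<bar>lam j k\<bar>) = lam j" using nonneg by (auto simp: fun_eq_iff)
    then show ?thesis using hs[of j] by (auto simp: summable_on_def)
  qed
  have Lpos: "0 < suminf (lam j)" for j
  proof -
    have "lam j 0 \<le> suminf (lam j)"
      using sum_le_suminf[OF summ, of "{0}" j] nonneg by auto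
    then show ?thesis using pos[of j] by linarith
  qed
  have eq: "infsum (\<lambda>g. \<Prod>x\<in>{..<d}. lam x (g x)) (PiE {..<d} (\<lambda>_. UNIV)) = (\<Prod>x\<in>{..<d}. infsum (lam x) UNIV)"
    by (rule infsum_prod_PiE_abs) (auto intro: ab)
  have inf: "infsum (lam x) UNIV = suminf (lam x)" for x using hs[of x] by (rule infsumI)
  have tt: "tensor_trace lam d = (\<Prod>x\<in>{..<d}. infsum (lam x) UNIV)"
    unfolding tensor_trace_def inf by simp
  have tpos: "0 < tensor_trace lam d" unfolding tensor_trace_def using Lpos by (simp add: prod_pos)
  have ie: "infsum (tensor_eig lam d) (tensor_index d) = tensor_trace lam d"
    unfolding tensor_eig_def tensor_index_def tt using eq by simp
  have "tensor_eig lam d summable_on tensor_index d"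
    using ie tpos infsum_not_exists by fastforce
  then show ?thesis using ie tpos by simp
qed

lemma tensor_eigs_facts:
  fixes lam :: "nat \<Rightarrow> nat \<Rightarrow> real"
  assumes nonneg: "\<And>j k. 0 \<le> lam j k"
    and nonincr: "\<And>j k. lam j (Suc k) \<le> lam j k"
    and summ: "\<And>j. summable (lam j)"
    and pos: "\<And>j. 0 < lam j 0"
  shows "tensor_eigs lam d sums tensor_trace lam d"
    and "0 < tensor_trace lam d"
    and "tensor_eigs lam d 0 = (\<Prod>j<d. lam j 0)"
    and "tensor_eigs lam d k \<le> (\<Prod>j<d. lam j 0)"
    and "0 \<le> tensor_eigs lam d k"
proof -
  note ts = tensor_sum[OF nonneg summ pos, where d=d]
  have nn: "0 \<le> tensor_eig lam d i" for i unfolding tensor_eig_def by (simp add: prod_nonneg nonneg)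
  show s: "tensor_eigs lam d sums tensor_trace lam d"
    unfolding tensor_eigs_def using dr_sums[of "tensor_index d" "tensor_eig lam d"] ts nn by simp
  show "0 < tensor_trace lam d" using ts by simp
  have B: "tensor_eig lam d i \<le> (\<Prod>j<d. lam j 0)" for i
    unfolding tensor_eig_def by (rule prod_mono) (auto simp: nonneg lam_le0[where lam=lam, OF nonincr])
  have M0: "0 \<le> (\<Prod>j<d. lam j 0)" by (simp add: prod_nonneg nonneg)
  have up: "tensor_eigs lam d 0 \<le> (\<Prod>j<d. lam j 0)"
    unfolding tensor_eigs_def
  proof (rule dr_le[OF M0])
    fix t S assume S: "S \<subseteq> tensor_index d" "finite S" "card S = Suc 0" "\<forall>i\<in>S. t \<le> tensor_eig lam d i"
    then obtain i where "S = {i}" by (auto simp: card_Suc_eq)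
    with S have "t \<le> tensor_eig lam d i" by auto
    then show "t \<le> (\<Prod>j<d. lam j 0)" using B[of i] by linarith
  qed
  have lo: "(\<Prod>j<d. lam j 0) \<le> tensor_eigs lam d 0"
    unfolding tensor_eigs_def
  proof (rule dr_ge[where B="\<Prod>j<d. lam j 0" and S="{restrict (\<lambda>_. 0) {..<d}}"])
    show "\<And>i. i \<in> tensor_index d \<Longrightarrow> tensor_eig lam d i \<le> (\<Prod>j<d. lam j 0)" using B by blast
    show "{restrict (\<lambda>_. 0) {..<d}} \<subseteq> tensor_index d" unfolding tensor_index_def by auto
    show "\<forall>i\<in>{restrict (\<lambda>_. 0) {..<d}}. (\<Prod>j<d. lam j 0) \<le> tensor_eig lam d i"
      unfolding tensor_eig_def by simp
  qed auto
  show "tensor_eigs lam d 0 = (\<Prod>j<d. lam j 0)" using up lo by linarith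
  show "0 \<le> tensor_eigs lam d k" unfolding tensor_eigs_def by (rule dr_nonneg[where B="\<Prod>j<d. lam j 0"], rule B)
  have "tensor_eigs lam d k \<le> tensor_eigs lam d 0"
  proof (induction k)
    case (Suc k)
    have "tensor_eigs lam d (Suc k) \<le> tensor_eigs lam d k"
      unfolding tensor_eigs_def by (rule dr_mono[where B="\<Prod>j<d. lam j 0"], rule B)
    then show ?case using Suc by linarith
  qed simp
  then show "tensor_eigs lam d k \<le> (\<Prod>j<d. lam j 0)" using up by linarith
qed

lemma prod_ge_1_sum:
  fixes a :: "nat \<Rightarrow> real"
  assumes "\<And>j. 0 \<le> a j"
  shows "1 + (\<Sum>j<d. a j) \<le> (\<Prod>j<d. 1 + a j)"
proof (induction d)
  case (Suc d)
  have S: "0 \<le> (\<Sum>j<d. a j)" using assms by (simp add: sum_nonneg)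
  have "1 + (\<Sum>j<Suc d. a j) \<le> (1 + (\<Sum>j<d. a j)) * (1 + a d)"
    using S assms[of d] by (simp add: algebra_simps)
  also have "\<dots> \<le> (\<Prod>j<d. 1 + a j) * (1 + a d)"
    using Suc assms[of d] by (intro mult_right_mono) auto
  finally show ?case by simp
qed simp

lemma trace_ratio:
  fixes lam :: "nat \<Rightarrow> nat \<Rightarrow> real"
  assumes nonneg: "\<And>j k. 0 \<le> lam j k" and summ: "\<And>j. summable (lam j)"
    and pos: "\<And>j. 0 < lam j 0"
  shows "(\<Prod>j<d. lam j 0) / tensor_trace lam d = 1 / (\<Prod>j<d. 1 + (\<Sum>k. lam j (Suc k)) / lam j 0)"
proof -
  have L: "(\<Sum>k. lam j k) = lam j 0 * (1 + (\<Sum>k. lam j (Suc k)) / lam j 0)" for j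
    using suminf_split_head[OF summ[of j]] pos[of j] by (simp add: field_simps)
  have "tensor_trace lam d = (\<Prod>j<d. lam j 0) * (\<Prod>j<d. 1 + (\<Sum>k. lam j (Suc k)) / lam j 0)"
    unfolding tensor_trace_def L by (simp add: prod.distrib)
  moreover have "0 < (\<Prod>j<d. lam j 0)" using pos by (simp add: prod_pos)
  moreover have "0 < (\<Prod>j<d. 1 + (\<Sum>k. lam j (Suc k)) / lam j 0)"
  proof (rule prod_pos)
    fix j
    have "0 \<le> (\<Sum>k. lam j (Suc k))"
      by (rule suminf_nonneg) (use summ[of j] nonneg in \<open>auto simp: summable_Suc_iff\<close>)
    then have "0 \<le> (\<Sum>k. lam j (Suc k)) / lam j 0" using pos[of j] by simp
    then show "0 < 1 + (\<Sum>k. lam j (Suc k)) / lam j 0" by linarith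
  qed
  ultimately show ?thesis
    by (metis nonzero_divide_mult_cancel_left less_irrefl)
qed



theorem proposition4:
  fixes lam :: "nat \<Rightarrow> nat \<Rightarrow> real"
  assumes nonneg: "\<And>j k. 0 \<le> lam j k"
    and nonincr: "\<And>j k. lam j (Suc k) \<le> lam j k"
    and summ: "\<And>j. summable (lam j)"
    and pos: "\<And>j. 0 < lam j 0"
  shows "(\<forall>\<epsilon>::real. 0 < \<epsilon> \<and> \<epsilon> < 1 \<longrightarrow>
            filterlim (\<lambda>d. avg_complexity lam d \<epsilon>) at_top sequentially)
     \<longleftrightarrow> \<not> summable (\<lambda>j. (\<Sum>k. lam j (Suc k)) / lam j 0)"
proof -
  define a where "a j = (\<Sum>k. lam j (Suc k)) / lam j 0" for j
  define r where "r d = tensor_eigs lam d" for d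
  define T where "T d = tensor_trace lam d" for d
  define M where "M d = (\<Prod>j<d. lam j 0)" for d
  define p where "p d = M d / T d" for d
  note F = tensor_eigs_facts[OF nonneg nonincr summ pos]
  have rs: "r d sums T d" for d unfolding r_def T_def by (rule F(1))
  have Tpos: "0 < T d" for d unfolding T_def by (rule F(2))
  have r0: "r d 0 = M d" for d unfolding r_def M_def by (rule F(3))
  have rle: "r d k \<le> M d" for d k unfolding r_def M_def by (rule F(4))
  have rnn: "0 \<le> r d k" for d k unfolding r_def by (rule F(5))
  have Mnn: "0 \<le> M d" for d unfolding M_def by (simp add: prod_nonneg nonneg)
  have pnn: "0 \<le> p d" for d unfolding p_def using Mnn Tpos by (simp add: less_imp_le)
  have ann: "0 \<le> a j" for j
  proof -
    have "0 \<le> (\<Sum>k. lam j (Suc k))"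
      by (rule suminf_nonneg) (use summ[of j] nonneg in \<open>auto simp: summable_Suc_iff\<close>)
    then show ?thesis unfolding a_def using pos[of j] by simp
  qed
  have pa: "p d = 1 / (\<Prod>j<d. 1 + a j)" for d
    unfolding p_def M_def T_def a_def by (rule trace_ratio[OF nonneg summ pos])
  have tail: "(\<Sum>k. r d (k + n)) = T d - (\<Sum>k<n. r d k)" for d n
    using suminf_split_initial_segment[OF sums_summable[OF rs[of d]], of n] sums_unique[OF rs[of d]]
    by linarith
  have avg: "avg_complexity lam d \<epsilon> = (LEAST n. (\<Sum>k. r d (k + n)) / T d \<le> \<epsilon>\<^sup>2)" for d \<epsilon>
    unfolding avg_complexity_def r_def T_def by simp
  have a_eq: "(\<lambda>j. (\<Sum>k. lam j (Suc k)) / lam j 0) = a" by (simp add: a_def fun_eq_iff)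
  show ?thesis
    unfolding a_eq
  proof
    assume H: "\<forall>\<epsilon>::real. 0 < \<epsilon> \<and> \<epsilon> < 1 \<longrightarrow>
            filterlim (\<lambda>d. avg_complexity lam d \<epsilon>) at_top sequentially"
    show "\<not> summable a"
    proof
      assume sa: "summable a"
      define c where "c = exp (- suminf a)"
      have cpos: "0 < c" unfolding c_def by simp
      have pc: "c \<le> p d" for d
      proof -
        have "(\<Prod>j<d. 1 + a j) \<le> exp (\<Sum>j<d. a j)" by (rule prod_le_exp_sum) (rule ann)
        also have "\<dots> \<le> exp (suminf a)" using sum_le_suminf[OF sa, of "{..<d}"] ann by simp
        finally have le: "(\<Prod>j<d. 1 + a j) \<le> exp (suminf a)" .
        have qpos: "0 < (\<Prod>j<d. 1 + a j)" using ann by (intro prod_pos) (smt (verit))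
        have "c = 1 / exp (suminf a)" unfolding c_def by (simp add: exp_minus field_simps)
        also have "\<dots> \<le> 1 / (\<Prod>j<d. 1 + a j)" using le qpos by (intro divide_left_mono) auto
        finally show ?thesis using pa by simp
      qed
      have c1: "c \<le> 1" using pc[of 0] unfolding pa by simp
      define \<epsilon> where "\<epsilon> = sqrt (1 - c / 2)"
      have e2: "\<epsilon>\<^sup>2 = 1 - c / 2" unfolding \<epsilon>_def using c1 by simp
      have e0: "0 < \<epsilon>" unfolding \<epsilon>_def using c1 by simp
      have e1: "\<epsilon> < 1" unfolding \<epsilon>_def using cpos by simp
      have le1: "avg_complexity lam d \<epsilon> \<le> 1" for d
        unfolding avg
      proof (rule Least_le)
        have "(\<Sum>k. r d (k + 1)) / T d = 1 - p d"
          unfolding tail p_def using r0[of d] Tpos[of d] by (simp add: field_simps)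
        then show "(\<Sum>k. r d (k + 1)) / T d \<le> \<epsilon>\<^sup>2" using e2 pc[of d] cpos by simp
      qed
      have "filterlim (\<lambda>d. avg_complexity lam d \<epsilon>) at_top sequentially" using H e0 e1 by blast
      then have "eventually (\<lambda>d. 2 \<le> avg_complexity lam d \<epsilon>) sequentially"
        by (simp add: filterlim_at_top)
      then obtain N where "\<And>d. d \<ge> N \<Longrightarrow> 2 \<le> avg_complexity lam d \<epsilon>"
        by (auto simp: eventually_sequentially)
      then show False using le1[of N] by fastforce
    qed
  next
    assume na: "\<not> summable a"
    have small: "\<exists>D. \<forall>d\<ge>D. p d < \<eta>" if eta: "0 < \<eta>" for \<eta>
    proof -
      have "\<exists>n. 1 / \<eta> < sum a {..n}"
      proof (rule ccontr)
        assume "\<not> ?thesis"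
        then have "\<And>n. sum a {..n} \<le> 1 / \<eta>" by (simp add: not_less)
        then have "summable a" by (rule bounded_imp_summable[OF ann])
        with na show False by simp
      qed
      then obtain n where n: "1 / \<eta> < sum a {..n}" by blast
      have "p d < \<eta>" if d: "d \<ge> Suc n" for d
      proof -
        have "sum a {..n} \<le> sum a {..<d}" using d ann by (intro sum_mono2) auto
        then have "1 / \<eta> < 1 + sum a {..<d}" using n ann by linarith
        also have "\<dots> \<le> (\<Prod>j<d. 1 + a j)" by (rule prod_ge_1_sum[OF ann])
        finally have lt: "1 / \<eta> < (\<Prod>j<d. 1 + a j)" .
        have "0 < 1 / \<eta>" using eta by simp
        moreover have "0 < (\<Prod>j<d. 1 + a j)" using lt \<open>0 < 1 / \<eta>\<close> by linarith
        ultimately have "1 / (\<Prod>j<d. 1 + a j) < 1 / (1 / \<eta>)" using lt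
          by (intro divide_strict_left_mono) auto
        then show ?thesis using pa eta by simp
      qed
      then show ?thesis by blast
    qed
    show "\<forall>\<epsilon>::real. 0 < \<epsilon> \<and> \<epsilon> < 1 \<longrightarrow>
            filterlim (\<lambda>d. avg_complexity lam d \<epsilon>) at_top sequentially"
    proof (intro allI impI)
      fix \<epsilon> :: real assume e: "0 < \<epsilon> \<and> \<epsilon> < 1"
      have e2: "0 < \<epsilon>\<^sup>2" "\<epsilon>\<^sup>2 < 1" using e by (auto simp: power_less_one_iff)
      show "filterlim (\<lambda>d. avg_complexity lam d \<epsilon>) at_top sequentially"
        unfolding filterlim_at_top
      proof
        fix Z :: nat
        define \<eta> where "\<eta> = (1 - \<epsilon>\<^sup>2) / (real Z + 1)"
        have eta: "0 < \<eta>" unfolding \<eta>_def using e2 by simp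
        obtain D where D: "\<And>d. d \<ge> D \<Longrightarrow> p d < \<eta>" using small[OF eta] by blast
        have "Z \<le> avg_complexity lam d \<epsilon>" if d: "d \<ge> D" for d
        proof (rule ccontr)
          assume "\<not> Z \<le> avg_complexity lam d \<epsilon>"
          then have lt: "avg_complexity lam d \<epsilon> < Z" by simp
          let ?P = "\<lambda>n. (\<Sum>k. r d (k + n)) / T d \<le> \<epsilon>\<^sup>2"
          have ex: "\<exists>n. ?P n"
          proof -
            have lim: "(\<lambda>n. \<Sum>k<n. r d k) \<longlonglongrightarrow> T d" using rs[of d] by (simp add: sums_def)
            have "T d * (1 - \<epsilon>\<^sup>2) < T d" using Tpos[of d] e2 by simp
            then have "eventually (\<lambda>n. T d * (1 - \<epsilon>\<^sup>2) < (\<Sum>k<n. r d k)) sequentially"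
              using lim order_tendstoD(1) by blast
            then obtain n where n: "T d * (1 - \<epsilon>\<^sup>2) < (\<Sum>k<n. r d k)"
              by (auto simp: eventually_sequentially)
            have "?P n" unfolding tail using n Tpos[of d] by (simp add: field_simps)
            then show ?thesis by blast
          qed
          define n where "n = avg_complexity lam d \<epsilon>"
          have Pn: "?P n" unfolding n_def avg using LeastI_ex[OF ex] .
          have nZ: "n < Z" using lt n_def by simp
          have "(\<Sum>k<n. r d k) \<le> real n * M d"
            using sum_mono[of "{..<n}" "r d" "\<lambda>_. M d"] rle by simp
          also have "\<dots> = real n * p d * T d" unfolding p_def using Tpos[of d] by simp
          also have "\<dots> \<le> real Z * \<eta> * T d"
          proof -
            have "real n * p d \<le> real Z * \<eta>"
              using nZ D[OF d] pnn[of d] eta by (intro mult_mono) auto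
            then show ?thesis using Tpos[of d] by (intro mult_right_mono) auto
          qed
          also have "\<dots> < (1 - \<epsilon>\<^sup>2) * T d"
          proof -
            have "real Z * \<eta> < 1 - \<epsilon>\<^sup>2" unfolding \<eta>_def using e2 by (simp add: field_simps)
            then show ?thesis using Tpos[of d] by simp
          qed
          finally have "\<epsilon>\<^sup>2 * T d < T d - (\<Sum>k<n. r d k)" by (simp add: algebra_simps)
          then have "\<epsilon>\<^sup>2 < (\<Sum>k. r d (k + n)) / T d" unfolding tail using Tpos[of d]
            by (simp add: field_simps)
          then show False using Pn by simp
        qed
        then show "eventually (\<lambda>d. Z \<le> avg_complexity lam d \<epsilon>) sequentially"
          by (auto simp: eventually_sequentially)
      qed
    qed
  qed
qed

end
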